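(* Let ${\cal H}$ be a finite-dimensional complex Hilbert space, let $Z$ be a positive definite operator on ${\cal H}$ with largest eigenvalue $a$ and smallest eigenvalue $b$, and let $1\le p\le 2$. Then for every subspace ${\cal E}\subset{\cal H}$, $$(Z_{\cal E})^p \ge \frac{4ab}{(a+b)^2}\,(Z^p)_{\cal E}.$$
   Context: For an operator $X$ on ${\cal H}$ and a subspace ${\cal E}$ with orthogonal projection $E$, the compression $X_{\cal E}$ is the operator $EXE$ restricted to ${\cal E}$, regarded as an operator on ${\cal E}$. The order $\ge$ is the Loewner order on Hermitian operators on ${\cal E}$. *)

theory Defs
  imports Complex_Main "Jordan_Normal_Form.Schur_Decomposition" "Jordan_Normal_Form.Char_Poly"
begin

text \<open>Operators on the n-dimensional complex Hilbert space C^n are n x n complex matrices;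
  mat_adjoint is the conjugate transpose.\<close>

definition hermitian_mat :: "complex mat \<Rightarrow> nat \<Rightarrow> bool" where
  "hermitian_mat A n \<longleftrightarrow> A \<in> carrier_mat n n \<and> mat_adjoint A = A"

definition psd_mat :: "complex mat \<Rightarrow> nat \<Rightarrow> bool" where
  "psd_mat A n \<longleftrightarrow> hermitian_mat A n \<and>
     (\<forall>v \<in> carrier_vec n. 0 \<le> Re ((A *\<^sub>v v) \<bullet>c v))"

definition posdef_mat :: "complex mat \<Rightarrow> nat \<Rightarrow> bool" where
  "posdef_mat A n \<longleftrightarrow> hermitian_mat A n \<and>
     (\<forall>v \<in> carrier_vec n. v \<noteq> 0\<^sub>v n \<longrightarrow> 0 < Re ((A *\<^sub>v v) \<bullet>c v))"

definition loewner_ge :: "complex mat \<Rightarrow> complex mat \<Rightarrow> nat \<Rightarrow> bool" where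
  "loewner_ge A B n \<longleftrightarrow> A \<in> carrier_mat n n \<and> B \<in> carrier_mat n n \<and> psd_mat (A - B) n"

definition unitary_mat :: "complex mat \<Rightarrow> nat \<Rightarrow> bool" where
  "unitary_mat U n \<longleftrightarrow> U \<in> carrier_mat n n \<and> mat_adjoint U * U = 1\<^sub>m n"

definition diag_real :: "nat \<Rightarrow> (nat \<Rightarrow> real) \<Rightarrow> complex mat" where
  "diag_real n d = mat n n (\<lambda>(i,j). if i = j then complex_of_real (d i) else 0)"

definition mat_powr :: "complex mat \<Rightarrow> real \<Rightarrow> complex mat" where
  "mat_powr A p = (SOME B. \<exists>U d. unitary_mat U (dim_row A) \<and> (\<forall>i < dim_row A. 0 \<le> d i) \<and>
      A = U * diag_real (dim_row A) d * mat_adjoint U \<and>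
      B = U * diag_real (dim_row A) (\<lambda>i. d i powr p) * mat_adjoint U)"

text \<open>A subspace E of C^n of dimension k is represented by an isometry V (n x k matrix,
  V^* V = I_k) whose range is E, i.e. whose columns are an orthonormal basis of E.
  The compression X_E (= E X E restricted to E) is then, in that basis, V^* X V.\<close>
definition isometry_mat :: "complex mat \<Rightarrow> nat \<Rightarrow> nat \<Rightarrow> bool" where
  "isometry_mat V n k \<longleftrightarrow> V \<in> carrier_mat n k \<and> mat_adjoint V * V = 1\<^sub>m k"

definition compression :: "complex mat \<Rightarrow> complex mat \<Rightarrow> complex mat" where
  "compression V X = mat_adjoint V * X * V"

end

theory Submission
  imports Defs "Jordan_Normal_Form.Spectral_Radius" "HOL-Analysis.Convex"
begin

lemma adj_dim[simp]: "dim_row (mat_adjoint A) = dim_col A" "dim_col (mat_adjoint A) = dim_row A"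
  unfolding mat_adjoint_def by auto

lemma adj_index[simp]: "i < dim_col A \<Longrightarrow> j < dim_row A \<Longrightarrow> mat_adjoint A $$ (i,j) = cnj (A $$ (j,i))"
  unfolding mat_adjoint_def by (auto simp: mat_of_rows_def)

lemma adj_carrier[simp]: "A \<in> carrier_mat n m \<Longrightarrow> mat_adjoint A \<in> carrier_mat m n"
  by auto

lemma adj_adj[simp]: "mat_adjoint (mat_adjoint (A::complex mat)) = A"
  by (rule eq_matI, auto)

lemma adj_mult: assumes "(A::complex mat) \<in> carrier_mat n m" "B \<in> carrier_mat m k"
  shows "mat_adjoint (A * B) = mat_adjoint B * mat_adjoint A"
  by (rule eq_matI, insert assms, auto simp: scalar_prod_def intro!: sum.cong)

lemma adj_add: assumes "(A::complex mat) \<in> carrier_mat n m" "B \<in> carrier_mat n m"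
  shows "mat_adjoint (A + B) = mat_adjoint A + mat_adjoint B"
  by (rule eq_matI, insert assms, auto)

lemma adj_minus: assumes "(A::complex mat) \<in> carrier_mat n m" "B \<in> carrier_mat n m"
  shows "mat_adjoint (A - B) = mat_adjoint A - mat_adjoint B"
  by (rule eq_matI, insert assms, auto)

lemma adj_smult: "mat_adjoint ((c::complex) \<cdot>\<^sub>m A) = cnj c \<cdot>\<^sub>m mat_adjoint A"
  by (rule eq_matI, auto)

lemma adj_one[simp]: "mat_adjoint (1\<^sub>m n :: complex mat) = 1\<^sub>m n"
  by (rule eq_matI, auto)

lemma diag_real_carrier[simp]: "diag_real n d \<in> carrier_mat n n"
  and diag_real_dim[simp]: "dim_row (diag_real n d) = n" "dim_col (diag_real n d) = n"
  unfolding diag_real_def by auto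

lemma diag_real_index[simp]: "i < n \<Longrightarrow> j < n \<Longrightarrow> diag_real n d $$ (i,j) = (if i = j then complex_of_real (d i) else 0)"
  unfolding diag_real_def by auto

lemma adj_diag_real[simp]: "mat_adjoint (diag_real n d) = diag_real n d"
  by (rule eq_matI, auto)

lemma inner_adj: assumes A: "(A::complex mat) \<in> carrier_mat n m" and v: "v \<in> carrier_vec m" and w: "w \<in> carrier_vec n"
  shows "(A *\<^sub>v v) \<bullet>c w = v \<bullet>c (mat_adjoint A *\<^sub>v w)"
proof -
  have "(A *\<^sub>v v) \<bullet>c w = (\<Sum>i<n. (\<Sum>j<m. A $$ (i,j) * v $ j) * cnj (w $ i))"
    using assms by (auto simp: scalar_prod_def atLeast0LessThan intro!: sum.cong)
  also have "\<dots> = (\<Sum>i<n. \<Sum>j<m. A $$ (i,j) * v $ j * cnj (w $ i))"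
    by (simp add: sum_distrib_right)
  also have "\<dots> = (\<Sum>j<m. \<Sum>i<n. A $$ (i,j) * v $ j * cnj (w $ i))"
    by (rule sum.swap)
  also have "\<dots> = (\<Sum>j<m. v $ j * cnj (\<Sum>i<n. cnj (A $$ (i,j)) * w $ i))"
    by (simp add: sum_distrib_left mult_ac)
  also have "\<dots> = v \<bullet>c (mat_adjoint A *\<^sub>v w)"
    using assms by (auto simp: scalar_prod_def atLeast0LessThan intro!: sum.cong)
  finally show ?thesis .
qed

lemma unitary_right: assumes "unitary_mat U n" shows "U * mat_adjoint U = 1\<^sub>m n"
  using assms mat_mult_left_right_inverse[of "mat_adjoint U" n U] unfolding unitary_mat_def by auto

lemma unitary_mult: assumes W: "unitary_mat W n" and U: "unitary_mat U n"
  shows "unitary_mat (W * U) n"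
proof -
  have Wc: "W \<in> carrier_mat n n" and Uc: "U \<in> carrier_mat n n" using W U unfolding unitary_mat_def by auto
  have e: "mat_adjoint W * (W * U) = (mat_adjoint W * W) * U"
    by (rule assoc_mult_mat[symmetric, of _ n n _ n _ n], auto simp: Wc Uc)
  have "mat_adjoint (W * U) * (W * U) = mat_adjoint U * (mat_adjoint W * (W * U))"
    using Wc Uc by (simp add: adj_mult assoc_mult_mat[of _ n n _ n _ n])
  also have "\<dots> = 1\<^sub>m n" unfolding e using W U Uc unfolding unitary_mat_def by simp
  finally show ?thesis using Wc Uc unfolding unitary_mat_def by auto
qed

abbreviation blk :: "complex mat \<Rightarrow> nat \<Rightarrow> complex mat" where
  "blk U m \<equiv> four_block_mat (1\<^sub>m 1) (0\<^sub>m 1 m) (0\<^sub>m m 1) U"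

lemma blk_carrier: "U \<in> carrier_mat m m \<Longrightarrow> blk U m \<in> carrier_mat (Suc m) (Suc m)"
  by auto

lemma blk_adj: assumes "U \<in> carrier_mat m m"
  shows "mat_adjoint (blk U m) = blk (mat_adjoint U) m"
  by (rule eq_matI, insert assms, auto)

lemma blk_unitary: assumes "unitary_mat U m" shows "unitary_mat (blk U m) (Suc m)"
proof -
  have Uc: "U \<in> carrier_mat m m" using assms unfolding unitary_mat_def by auto
  have "mat_adjoint (blk U m) * blk U m = blk (mat_adjoint U * U) m"
    unfolding blk_adj[OF Uc]
    by (subst mult_four_block_mat[of _ 1 1 _ m _ m], insert Uc, auto)
  also have "\<dots> = 1\<^sub>m (Suc m)" using assms four_block_one_mat[of 1 m] unfolding unitary_mat_def by simp
  finally show ?thesis using Uc unfolding unitary_mat_def by auto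
qed

lemma blk_diag: "diag_real (Suc m) (\<lambda>i. if i = 0 then x else d (i - 1)) =
   four_block_mat (diag_real 1 (\<lambda>_. x)) (0\<^sub>m 1 m) (0\<^sub>m m 1) (diag_real m d)"
  by (rule eq_matI, auto)

lemma blk_conj: assumes U: "U \<in> carrier_mat m m" and X: "X \<in> carrier_mat 1 1" and Y: "Y \<in> carrier_mat m m"
  shows "blk U m * four_block_mat X (0\<^sub>m 1 m) (0\<^sub>m m 1) Y * mat_adjoint (blk U m)
     = four_block_mat X (0\<^sub>m 1 m) (0\<^sub>m m 1) (U * Y * mat_adjoint U)"
  unfolding blk_adj[OF U]
  apply (subst mult_four_block_mat[of _ 1 1 _ m _ m], insert assms, auto)
  apply (subst mult_four_block_mat[of _ 1 1 _ m _ m], insert assms, auto)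
  done

lemma conj_cnj[simp]: "conjugate (x::complex) = cnj x" by simp

lemma mv_carrier[simp]: "A \<in> carrier_mat n m \<Longrightarrow> v \<in> carrier_vec m \<Longrightarrow> A *\<^sub>v v \<in> carrier_vec n"
  by auto

lemma self_inner: assumes "v \<in> carrier_vec n"
  shows "v \<bullet>c v = complex_of_real (\<Sum>i<n. (cmod (v $ i))^2)"
proof -
  have "v \<bullet>c v = (\<Sum>i<n. v $ i * cnj (v $ i))"
    using assms by (auto simp: scalar_prod_def atLeast0LessThan)
  also have "\<dots> = (\<Sum>i<n. complex_of_real ((cmod (v $ i))^2))"
    by (rule sum.cong, auto simp: complex_mult_cnj cmod_def)
  finally show ?thesis by simp
qed

lemma self_inner_pos: assumes "v \<in> carrier_vec n" "v \<noteq> 0\<^sub>v n"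
  shows "(\<Sum>i<n. (cmod (v $ i))^2) > 0"
proof -
  obtain i where i: "i < n" "v $ i \<noteq> 0" using assms by (metis eq_vecI carrier_vecD index_zero_vec)
  have "(cmod (v $ i))^2 \<le> (\<Sum>i<n. (cmod (v $ i))^2)"
    by (rule member_le_sum, insert i, auto)
  moreover have "(cmod (v $ i))^2 > 0" using i by auto
  ultimately show ?thesis by linarith
qed

lemma diag_real_one: "diag_real n (\<lambda>_. 1) = 1\<^sub>m n"
  by (rule eq_matI, auto)

lemma diag_mult_vec: assumes "w \<in> carrier_vec n" "i < n"
  shows "(diag_real n f *\<^sub>v w) $ i = complex_of_real (f i) * w $ i"
proof -
  have "(diag_real n f *\<^sub>v w) $ i = (\<Sum>j<n. (if i = j then complex_of_real (f i) else 0) * w $ j)"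
    using assms by (auto simp: scalar_prod_def atLeast0LessThan intro!: sum.cong)
  also have "\<dots> = (\<Sum>j<n. if i = j then complex_of_real (f i) * w $ j else 0)"
    by (rule sum.cong, auto)
  also have "\<dots> = complex_of_real (f i) * w $ i" using assms by (simp add: sum.delta)
  finally show ?thesis .
qed

lemma qf_diag: assumes U: "U \<in> carrier_mat n n" and y: "y \<in> carrier_vec n"
  shows "((U * diag_real n f * mat_adjoint U) *\<^sub>v y) \<bullet>c y
     = complex_of_real (\<Sum>i<n. f i * (cmod ((mat_adjoint U *\<^sub>v y) $ i))^2)"
proof -
  define w where "w = mat_adjoint U *\<^sub>v y"
  have w: "w \<in> carrier_vec n" using U y unfolding w_def by (metis adj_carrier mv_carrier)
  have "(U * diag_real n f * mat_adjoint U) *\<^sub>v y = (U * diag_real n f) *\<^sub>v w"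
    unfolding w_def using U y by (intro assoc_mult_mat_vec[of _ n n _ n], auto)
  also have "\<dots> = U *\<^sub>v (diag_real n f *\<^sub>v w)"
    using U w by (intro assoc_mult_mat_vec[of _ n n _ n], auto)
  finally have "(U * diag_real n f * mat_adjoint U) *\<^sub>v y = U *\<^sub>v (diag_real n f *\<^sub>v w)" .
  moreover have "(U *\<^sub>v (diag_real n f *\<^sub>v w)) \<bullet>c y = (diag_real n f *\<^sub>v w) \<bullet>c w"
    unfolding w_def by (rule inner_adj[OF U mv_carrier[OF diag_real_carrier w[unfolded w_def]] y])
  ultimately have "((U * diag_real n f * mat_adjoint U) *\<^sub>v y) \<bullet>c y = (diag_real n f *\<^sub>v w) \<bullet>c w"
    by simp
  also have "\<dots> = (\<Sum>i<n. (f i * w $ i) * cnj (w $ i))"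
    using w by (auto simp: scalar_prod_def atLeast0LessThan diag_mult_vec simp del: index_mult_mat_vec intro!: sum.cong)
  also have "\<dots> = (\<Sum>i<n. complex_of_real (f i * (cmod (w $ i))^2))"
    by (rule sum.cong, auto simp: complex_mult_cnj cmod_def mult.assoc)
  finally show ?thesis unfolding w_def by simp
qed

lemma unitary_norm: assumes U: "unitary_mat U n" and y: "y \<in> carrier_vec n"
  shows "(\<Sum>i<n. (cmod ((mat_adjoint U *\<^sub>v y) $ i))^2) = (\<Sum>i<n. (cmod (y $ i))^2)"
proof -
  have Uc: "U \<in> carrier_mat n n" using U unfolding unitary_mat_def by auto
  have "U * diag_real n (\<lambda>_. 1) * mat_adjoint U = 1\<^sub>m n"
    using unitary_right[OF U] Uc by (simp add: diag_real_one)
  note q = qf_diag[OF Uc y, of "\<lambda>_. 1", unfolded this one_mult_mat_vec[OF y]]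
  from q[unfolded self_inner[OF y]] show ?thesis by (metis (no_types, lifting) of_real_eq_iff mult_1 sum.cong)
qed

lemma isometry_inner: fixes V :: "complex mat" assumes V: "V \<in> carrier_mat n k" "mat_adjoint V * V = 1\<^sub>m k" and v: "v \<in> carrier_vec k"
  shows "(V *\<^sub>v v) \<bullet>c (V *\<^sub>v v) = v \<bullet>c v"
proof -
  have "(V *\<^sub>v v) \<bullet>c (V *\<^sub>v v) = v \<bullet>c (mat_adjoint V *\<^sub>v (V *\<^sub>v v))"
    by (rule inner_adj[of V n k], insert V v, auto)
  also have "mat_adjoint V *\<^sub>v (V *\<^sub>v v) = v"
    using V v by (simp add: assoc_mult_mat_vec[symmetric, of _ k n _ k])
  finally show ?thesis .
qed

lemma adj_mult_index: fixes W :: "complex mat" assumes "W \<in> carrier_mat n k" "i < k" "j < k"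
  shows "(mat_adjoint W * W) $$ (i,j) = col W j \<bullet>c col W i"
  using assms by (auto simp: scalar_prod_def intro!: sum.cong)

lemma orthonormal_ext: assumes n: "n > 0" and u: "u \<in> carrier_vec n" and uu: "u \<bullet>c u = 1"
  shows "\<exists>W. unitary_mat W n \<and> col W 0 = u"
proof -
  interpret cof_vec_space n "TYPE(complex)" .
  have u0: "u \<noteq> 0\<^sub>v n" using uu u by auto
  define b where "b = basis_completion u"
  note bc = basis_completion[OF u u0, folded b_def]
  define ws where "ws = gram_schmidt n b"
  note gs = gram_schmidt_result[OF bc(2) bc(4) bc(5) ws_def]
  have lws: "length ws = n" using gs bc by auto
  have bu: "b = u # tl b" using bc(6,7) n by (cases b, auto)
  have hws: "hd ws = u" unfolding ws_def by (subst bu, rule gram_schmidt_hd[OF u])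
  have wsc: "\<And>i. i < n \<Longrightarrow> ws ! i \<in> carrier_vec n" using gs(3) lws by auto
  define N where "N i = (\<Sum>l<n. (cmod ((ws ! i) $ l))^2)" for i
  have wsN: "\<And>i. i < n \<Longrightarrow> ws ! i \<bullet>c ws ! i = complex_of_real (N i)"
    unfolding N_def by (rule self_inner, rule wsc)
  have Npos: "\<And>i. i < n \<Longrightarrow> N i > 0"
  proof -
    fix i assume i: "i < n"
    have "ws ! i \<bullet>c ws ! i \<noteq> 0" using gs(2) i lws unfolding corthogonal_def by auto
    hence "ws ! i \<noteq> 0\<^sub>v n" by auto
    thus "N i > 0" unfolding N_def by (rule self_inner_pos[OF wsc[OF i]])
  qed
  define ws' where "ws' = map (\<lambda>i. complex_of_real (1 / sqrt (N i)) \<cdot>\<^sub>v ws ! i) [0..<n]"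
  have lws': "length ws' = n" unfolding ws'_def by auto
  have ws'i: "\<And>i. i < n \<Longrightarrow> ws' ! i = complex_of_real (1 / sqrt (N i)) \<cdot>\<^sub>v ws ! i"
    unfolding ws'_def by auto
  have ws'c: "\<And>i. i < n \<Longrightarrow> ws' ! i \<in> carrier_vec n" using ws'i wsc by auto
  have orth: "\<And>i j. i < n \<Longrightarrow> j < n \<Longrightarrow> ws' ! i \<bullet>c ws' ! j = (if i = j then 1 else 0)"
  proof -
    fix i j assume i: "i < n" and j: "j < n"
    have "ws' ! i \<bullet>c ws' ! j = complex_of_real (1 / sqrt (N i)) * complex_of_real (1 / sqrt (N j)) * (ws ! i \<bullet>c ws ! j)"
      unfolding ws'i[OF i] ws'i[OF j] using wsc[OF i] wsc[OF j]
      by (simp add: conjugate_smult_vec)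
    also have "\<dots> = (if i = j then 1 else 0)"
    proof (cases "i = j")
      case True
      have "sqrt (N i) * sqrt (N i) = N i" using Npos[OF i] by simp
      thus ?thesis using True wsN[OF i] Npos[OF i] 
        by (simp add: field_simps flip: of_real_mult)
    next
      case False
      thus ?thesis using gs(2) i j lws unfolding corthogonal_def by auto
    qed
    finally show "ws' ! i \<bullet>c ws' ! j = (if i = j then 1 else 0)" .
  qed
  define W where "W = mat_of_cols n ws'"
  have Wc: "W \<in> carrier_mat n n" unfolding W_def using lws' by auto
  have colW: "\<And>j. j < n \<Longrightarrow> col W j = ws' ! j" unfolding W_def
    by (rule col_mat_of_cols, insert lws' ws'c, auto)
  have "mat_adjoint W * W = 1\<^sub>m n"
  proof (rule eq_matI)
    fix i j assume i: "i < dim_row (1\<^sub>m n :: complex mat)" and j: "j < dim_col (1\<^sub>m n :: complex mat)"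
    hence i: "i < n" and j: "j < n" by auto
    show "(mat_adjoint W * W) $$ (i, j) = 1\<^sub>m n $$ (i, j)"
      unfolding adj_mult_index[OF Wc i j] colW[OF i] colW[OF j] orth[OF j i] using i j by auto
  qed (insert Wc, auto)
  hence unit: "unitary_mat W n" using Wc unfolding unitary_mat_def by auto
  have N0: "N 0 = 1" using wsN[OF n] uu hws lws n by (cases ws, auto)
  have "col W 0 = u" using colW[OF n] ws'i[OF n] N0 hws lws n by (cases ws, auto)
  with unit show ?thesis by blast
qed

lemma sq_mult_carrier[simp]: "A \<in> carrier_mat n n \<Longrightarrow> B \<in> carrier_mat n n \<Longrightarrow> A * B \<in> carrier_mat n n"
  by auto

lemma sq_assoc: "A \<in> carrier_mat n n \<Longrightarrow> B \<in> carrier_mat n n \<Longrightarrow> C \<in> carrier_mat n n \<Longrightarrow> A * B * C = A * (B * C)"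
  by (rule assoc_mult_mat[of _ n n _ n _ n])

lemma spectral: "hermitian_mat A n \<Longrightarrow> \<exists>U d. unitary_mat U n \<and> A = U * diag_real n d * mat_adjoint U"
proof (induction n arbitrary: A)
  case 0
  hence A: "A \<in> carrier_mat 0 0" unfolding hermitian_mat_def by auto
  have "unitary_mat (1\<^sub>m 0) 0" unfolding unitary_mat_def by auto
  moreover have "A = 1\<^sub>m 0 * diag_real 0 (\<lambda>_. 0) * mat_adjoint (1\<^sub>m 0)"
    by (rule eq_matI, insert A, auto)
  ultimately show ?case by blast
next
  case (Suc m)
  define n where "n = Suc m"
  have A: "A \<in> carrier_mat n n" and hA: "mat_adjoint A = A" using Suc.prems unfolding hermitian_mat_def n_def by auto
  have n: "n > 0" unfolding n_def by auto
  from spectrum_non_empty[OF A n] obtain e where "eigenvalue A e" unfolding spectrum_def by auto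
  then obtain v where "eigenvector A v e" unfolding eigenvalue_def by auto
  hence v: "v \<in> carrier_vec n" and v0: "v \<noteq> 0\<^sub>v n" and Av: "A *\<^sub>v v = e \<cdot>\<^sub>v v"
    using A unfolding eigenvector_def by auto
  define r where "r = (\<Sum>i<n. (cmod (v $ i))^2)"
  have r: "r > 0" unfolding r_def by (rule self_inner_pos[OF v v0])
  have vv: "v \<bullet>c v = complex_of_real r" unfolding r_def by (rule self_inner[OF v])
  define u where "u = complex_of_real (1 / sqrt r) \<cdot>\<^sub>v v"
  have u: "u \<in> carrier_vec n" unfolding u_def using v by auto
  have uu: "u \<bullet>c u = 1"
  proof -
    have "u \<bullet>c u = complex_of_real (1 / sqrt r) * complex_of_real (1 / sqrt r) * (v \<bullet>c v)"
      unfolding u_def using v by (simp add: conjugate_smult_vec)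
    also have "\<dots> = 1" unfolding vv using r
      by (simp add: field_simps flip: of_real_mult)
    finally show ?thesis .
  qed
  have Au: "A *\<^sub>v u = e \<cdot>\<^sub>v u" unfolding u_def using A v
    by (simp add: mult_mat_vec[OF A v] Av smult_smult_assoc mult.commute)
  obtain W where W: "unitary_mat W n" and W0: "col W 0 = u" using orthonormal_ext[OF n u uu] by auto
  have Wc: "W \<in> carrier_mat n n" using W unfolding unitary_mat_def by auto
  have WW: "mat_adjoint W * W = 1\<^sub>m n" using W unfolding unitary_mat_def by auto
  have WW': "W * mat_adjoint W = 1\<^sub>m n" using unitary_right[OF W] .
  define A' where "A' = mat_adjoint W * A * W"
  have A'c: "A' \<in> carrier_mat n n" unfolding A'_def using Wc A by auto
  have hA': "mat_adjoint A' = A'" unfolding A'_def using Wc A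
    by (simp add: adj_mult[of _ n n _ n] hA sq_assoc[of _ n])
  have colA': "col A' 0 = e \<cdot>\<^sub>v unit_vec n 0"
  proof -
    have "col A' 0 = (mat_adjoint W * A) *\<^sub>v col W 0" unfolding A'_def
      by (rule col_mult2[of _ n n _ n], insert Wc A n, auto)
    also have "\<dots> = mat_adjoint W *\<^sub>v (A *\<^sub>v u)" unfolding W0
      by (rule assoc_mult_mat_vec[of _ n n _ n], insert Wc A u, auto)
    also have "\<dots> = e \<cdot>\<^sub>v (mat_adjoint W *\<^sub>v col W 0)" unfolding Au W0
      by (rule mult_mat_vec[of _ n n], insert Wc u, auto)
    also have "mat_adjoint W *\<^sub>v col W 0 = col (mat_adjoint W * W) 0"
      by (rule col_mult2[symmetric, of _ n n _ n], insert Wc n, auto)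
    also have "\<dots> = unit_vec n 0" unfolding WW using n by simp
    finally show ?thesis .
  qed
  have A'i0: "\<And>i. i < n \<Longrightarrow> A' $$ (i, 0) = (if i = 0 then e else 0)"
  proof -
    fix i assume i: "i < n"
    have "A' $$ (i, 0) = col A' 0 $ i" using A'c i n by auto
    thus "A' $$ (i, 0) = (if i = 0 then e else 0)" unfolding colA' using i n by auto
  qed
  have herm_idx: "\<And>i j. i < n \<Longrightarrow> j < n \<Longrightarrow> A' $$ (i, j) = cnj (A' $$ (j, i))"
  proof -
    fix i j assume i: "i < n" and j: "j < n"
    have "A' $$ (i, j) = mat_adjoint A' $$ (i, j)" unfolding hA' ..
    thus "A' $$ (i, j) = cnj (A' $$ (j, i))" using A'c i j by auto
  qed
  have A'0j: "\<And>j. j < n \<Longrightarrow> A' $$ (0, j) = (if j = 0 then e else 0)"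
  proof -
    fix j assume j: "j < n"
    show "A' $$ (0, j) = (if j = 0 then e else 0)"
    proof (cases "j = 0")
      case True thus ?thesis using A'i0[OF n] by simp
    next
      case False thus ?thesis using herm_idx[OF n j] A'i0[OF j] by simp
    qed
  qed
  have ereal: "e = complex_of_real (Re e)"
  proof -
    have "e = cnj e" using herm_idx[OF n n] A'i0[OF n] by simp
    hence "Im e = Im (cnj e)" by simp
    hence "Im e = 0" by simp
    thus ?thesis by (simp add: complex_eq_iff)
  qed
  define A3 where "A3 = mat m m (\<lambda>(i,j). A' $$ (Suc i, Suc j))"
  have hA3: "hermitian_mat A3 m" unfolding hermitian_mat_def
  proof
    show "A3 \<in> carrier_mat m m" unfolding A3_def by auto
    show "mat_adjoint A3 = A3"
    proof (rule eq_matI)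
      fix i j assume i: "i < dim_row A3" and j: "j < dim_col A3"
      hence i': "i < m" and j': "j < m" unfolding A3_def by auto
      have "mat_adjoint A3 $$ (i, j) = cnj (A' $$ (Suc j, Suc i))" using i' j' unfolding A3_def by simp
      also have "\<dots> = A' $$ (Suc i, Suc j)" using herm_idx[of "Suc i" "Suc j"] i' j' unfolding n_def by simp
      finally show "mat_adjoint A3 $$ (i, j) = A3 $$ (i, j)" using i' j' unfolding A3_def by simp
    qed (auto simp: A3_def)
  qed
  from Suc.IH[OF hA3] obtain U3 d3 where U3: "unitary_mat U3 m" and A3eq: "A3 = U3 * diag_real m d3 * mat_adjoint U3"
    by auto
  have U3c: "U3 \<in> carrier_mat m m" using U3 unfolding unitary_mat_def by auto
  define d where "d = (\<lambda>i. if i = 0 then Re e else d3 (i - 1))"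
  define B where "B = blk U3 m"
  have Bc: "B \<in> carrier_mat n n" unfolding B_def n_def using U3c by auto
  have A'blk: "A' = four_block_mat (diag_real 1 (\<lambda>_. Re e)) (0\<^sub>m 1 m) (0\<^sub>m m 1) A3"
  proof (rule eq_matI)
    fix i j assume i: "i < dim_row (four_block_mat (diag_real 1 (\<lambda>_. Re e)) (0\<^sub>m 1 m) (0\<^sub>m m 1) A3)"
      and j: "j < dim_col (four_block_mat (diag_real 1 (\<lambda>_. Re e)) (0\<^sub>m 1 m) (0\<^sub>m m 1) A3)"
    have i': "i < n" and j': "j < n" using i j unfolding A3_def n_def by auto
    show "A' $$ (i, j) = four_block_mat (diag_real 1 (\<lambda>_. Re e)) (0\<^sub>m 1 m) (0\<^sub>m m 1) A3 $$ (i, j)"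
    proof (cases "i = 0 \<or> j = 0")
      case True
      thus ?thesis using A'i0[OF i'] A'0j[OF j'] i j ereal by (auto simp: A3_def)
    next
      case False
      then obtain i0 j0 where "i = Suc i0" "j = Suc j0" by (metis not0_implies_Suc)
      thus ?thesis using i j by (auto simp: A3_def)
    qed
  qed (insert A'c, auto simp: A3_def n_def)
  have A'eq: "A' = B * diag_real n d * mat_adjoint B"
    unfolding A'blk A3eq B_def n_def d_def blk_diag
    by (rule blk_conj[symmetric], insert U3c, auto)
  define U where "U = W * B"
  have U: "unitary_mat U n" unfolding U_def B_def n_def
    by (rule unitary_mult[OF W[unfolded n_def] blk_unitary[OF U3]])
  have "A = (W * mat_adjoint W) * A * (W * mat_adjoint W)" unfolding WW' using A by simp
  also have "\<dots> = W * A' * mat_adjoint W" unfolding A'_def using Wc A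
    by (simp add: sq_assoc[of _ n])
  also have "\<dots> = U * diag_real n d * mat_adjoint U" unfolding A'eq U_def using Wc Bc
    by (simp add: sq_assoc[of _ n] adj_mult[of _ n n _ n])
  finally show ?case using U unfolding n_def by blast
qed

lemma qf_lin: fixes M N :: "complex mat"
  assumes M: "M \<in> carrier_mat k k" and N: "N \<in> carrier_mat k k" and v: "v \<in> carrier_vec k"
  shows "((M - c \<cdot>\<^sub>m N) *\<^sub>v v) \<bullet>c v = (M *\<^sub>v v) \<bullet>c v - c * ((N *\<^sub>v v) \<bullet>c v)"
proof -
  have "(M - c \<cdot>\<^sub>m N) *\<^sub>v v = M *\<^sub>v v - c \<cdot>\<^sub>v (N *\<^sub>v v)"
    by (rule eq_vecI, insert M N v, auto simp: scalar_prod_def sum_subtractf sum_distrib_left algebra_simps)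
  also have "(M *\<^sub>v v - c \<cdot>\<^sub>v (N *\<^sub>v v)) \<bullet>c v = (M *\<^sub>v v) \<bullet>c v - (c \<cdot>\<^sub>v (N *\<^sub>v v)) \<bullet>c v"
    by (rule minus_scalar_prod_distrib[of _ k], insert M N v, auto)
  also have "(c \<cdot>\<^sub>v (N *\<^sub>v v)) \<bullet>c v = c * ((N *\<^sub>v v) \<bullet>c v)"
    by (rule smult_scalar_prod_distrib[of _ k], insert N v, auto)
  finally show ?thesis .
qed

lemma comp_qf: fixes V M :: "complex mat"
  assumes V: "V \<in> carrier_mat n k" and M: "M \<in> carrier_mat n n" and v: "v \<in> carrier_vec k"
  shows "((mat_adjoint V * M * V) *\<^sub>v v) \<bullet>c v = (M *\<^sub>v (V *\<^sub>v v)) \<bullet>c (V *\<^sub>v v)"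
proof -
  have "(mat_adjoint V * M * V) *\<^sub>v v = (mat_adjoint V * M) *\<^sub>v (V *\<^sub>v v)"
    by (rule assoc_mult_mat_vec[of _ k n _ k], insert V M v, auto)
  also have "\<dots> = mat_adjoint V *\<^sub>v (M *\<^sub>v (V *\<^sub>v v))"
    by (rule assoc_mult_mat_vec[of _ k n _ n], insert V M v, auto)
  finally have e: "(mat_adjoint V * M * V) *\<^sub>v v = mat_adjoint V *\<^sub>v (M *\<^sub>v (V *\<^sub>v v))" .
  show ?thesis unfolding e
    by (subst inner_adj[of _ k n], insert V M v, auto)
qed

lemma herm_udu: fixes U :: "complex mat" assumes U: "U \<in> carrier_mat n n"
  shows "mat_adjoint (U * diag_real n f * mat_adjoint U) = U * diag_real n f * mat_adjoint U"
  using U by (simp add: adj_mult[of _ n n _ n] sq_assoc[of _ n])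

lemma herm_comp: fixes V M :: "complex mat"
  assumes V: "V \<in> carrier_mat n k" and M: "M \<in> carrier_mat n n" and h: "mat_adjoint M = M"
  shows "mat_adjoint (mat_adjoint V * M * V) = mat_adjoint V * M * V"
proof -
  have "mat_adjoint (mat_adjoint V * M * V) = mat_adjoint V * mat_adjoint (mat_adjoint V * M)"
    by (rule adj_mult[of _ k n _ k], insert V M, auto)
  also have "mat_adjoint (mat_adjoint V * M) = mat_adjoint M * V"
    by (subst adj_mult[of _ k n _ n], insert V M, auto)
  also have "mat_adjoint V * (mat_adjoint M * V) = mat_adjoint V * M * V"
    unfolding h by (rule assoc_mult_mat[symmetric, of _ k n _ n _ k], insert V M, auto)
  finally show ?thesis .
qed

lemma udu_eig: fixes U :: "complex mat"
  assumes U: "unitary_mat U n" and i: "i < n"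
  shows "(U * diag_real n d * mat_adjoint U) *\<^sub>v col U i = complex_of_real (d i) \<cdot>\<^sub>v col U i"
    "col U i \<bullet>c col U i = 1" "col U i \<in> carrier_vec n" "col U i \<noteq> 0\<^sub>v n"
proof -
  have Uc: "U \<in> carrier_mat n n" using U unfolding unitary_mat_def by auto
  have UU: "mat_adjoint U * U = 1\<^sub>m n" using U unfolding unitary_mat_def by auto
  show cc: "col U i \<bullet>c col U i = 1" using adj_mult_index[OF Uc i i] UU i by simp
  show ci: "col U i \<in> carrier_vec n" using Uc i by auto
  show "col U i \<noteq> 0\<^sub>v n" using cc ci by auto
  have e1: "mat_adjoint U *\<^sub>v col U i = unit_vec n i"
  proof -
    have "mat_adjoint U *\<^sub>v col U i = col (mat_adjoint U * U) i"
      by (rule col_mult2[symmetric, of _ n n _ n], insert Uc i, auto)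
    thus ?thesis unfolding UU using i by simp
  qed
  have e2: "diag_real n d *\<^sub>v unit_vec n i = complex_of_real (d i) \<cdot>\<^sub>v unit_vec n i"
    by (rule eq_vecI, insert i, auto simp: diag_mult_vec)
  have e3: "U *\<^sub>v unit_vec n i = col U i"
  proof -
    have "U *\<^sub>v unit_vec n i = U *\<^sub>v col (1\<^sub>m n) i" using i by simp
    also have "\<dots> = col (U * 1\<^sub>m n) i" by (rule col_mult2[symmetric, of _ n n _ n], insert Uc i, auto)
    finally show ?thesis using Uc by simp
  qed
  have "(U * diag_real n d * mat_adjoint U) *\<^sub>v col U i = (U * diag_real n d) *\<^sub>v (mat_adjoint U *\<^sub>v col U i)"
    by (rule assoc_mult_mat_vec[of _ n n _ n], insert Uc ci, auto)
  also have "\<dots> = U *\<^sub>v (diag_real n d *\<^sub>v unit_vec n i)" unfolding e1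
    by (rule assoc_mult_mat_vec[of _ n n _ n], insert Uc, auto)
  also have "\<dots> = complex_of_real (d i) \<cdot>\<^sub>v col U i" unfolding e2 e3[symmetric]
    by (rule mult_mat_vec[of _ n n], insert Uc, auto)
  finally show "(U * diag_real n d * mat_adjoint U) *\<^sub>v col U i = complex_of_real (d i) \<cdot>\<^sub>v col U i" .
qed

lemma udu_eig_qf: fixes U :: "complex mat"
  assumes U: "unitary_mat U n" and i: "i < n"
  shows "((U * diag_real n d * mat_adjoint U) *\<^sub>v col U i) \<bullet>c col U i = complex_of_real (d i)"
  unfolding udu_eig(1)[OF U i] using udu_eig(2-4)[OF U i] by simp

lemma pw_split: fixes y X Q th :: real assumes "y > 0" "X > 0" "Q > 0"
  shows "y powr (2 - th) = X powr th * Q powr (1 - th) * ((y / X) powr th * (y^2 / Q) powr (1 - th))"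
proof -
  have y2: "y^2 = y powr 2" using assms by (simp add: powr_numeral)
  have A: "(y^2) powr (1 - th) = y powr (2 * (1 - th))"
    unfolding y2 by (rule powr_powr)
  have B: "(y^2 / Q) powr (1 - th) = (y^2) powr (1 - th) / Q powr (1 - th)"
    by (rule powr_divide)
  have C: "(y / X) powr th = y powr th / X powr th"
    by (rule powr_divide)
  have D: "y powr th * y powr (2 * (1 - th)) = y powr (th + 2 * (1 - th))"
    by (rule powr_add[symmetric])
  have E: "th + 2 * (1 - th) = 2 - th" by simp
  have XQ: "X powr th > 0" "Q powr (1 - th) > 0" using assms by auto
  show ?thesis unfolding B C A using D E XQ by (simp add: field_simps)
qed

lemma holder2: fixes w1 w2 y1 y2 th :: real
  assumes w: "w1 \<ge> 0" "w2 \<ge> 0" "w1 + w2 = 1" and y: "y1 > 0" "y2 > 0" and th: "0 \<le> th" "th \<le> 1"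
  shows "w1 * y1 powr (2 - th) + w2 * y2 powr (2 - th) \<le> (w1 * y1 + w2 * y2) powr th * (w1 * y1^2 + w2 * y2^2) powr (1 - th)"
proof -
  define X where "X = w1 * y1 + w2 * y2"
  define Q where "Q = w1 * y1^2 + w2 * y2^2"
  have pos: "w1 * z1 + w2 * z2 > 0" if "z1 > 0" "z2 > 0" for z1 z2 :: real
  proof (cases "w1 = 0")
    case True thus ?thesis using w that by simp
  next
    case False hence "w1 > 0" using w by simp
    hence "w1 * z1 > 0" using that by simp
    moreover have "w2 * z2 \<ge> 0" using w that by simp
    ultimately show ?thesis by linarith
  qed
  have X: "X > 0" unfolding X_def using pos y by simp
  have Q: "Q > 0" unfolding Q_def using pos y by simp
  define M where "M = X powr th * Q powr (1 - th)"
  have M: "M > 0" unfolding M_def using X Q by simp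
  have yi: "y powr (2 - th) \<le> M * (th * (y / X) + (1 - th) * (y^2 / Q))" if "y > 0" for y
  proof -
    have "y powr (2 - th) = M * ((y / X) powr th * (y^2 / Q) powr (1 - th))"
      unfolding M_def by (rule pw_split[OF that X Q])
    also have "\<dots> \<le> M * (th * (y / X) + (1 - th) * (y^2 / Q))"
      by (rule mult_left_mono[OF Youngs_inequality_0], insert th that X Q M, auto)
    finally show ?thesis .
  qed
  have "w1 * y1 powr (2 - th) + w2 * y2 powr (2 - th) \<le>
     w1 * (M * (th * (y1 / X) + (1 - th) * (y1^2 / Q))) + w2 * (M * (th * (y2 / X) + (1 - th) * (y2^2 / Q)))"
    by (intro add_mono mult_left_mono yi, insert w y, auto)
  also have "\<dots> = M * (th * ((w1 * y1 + w2 * y2) / X) + (1 - th) * ((w1 * y1^2 + w2 * y2^2) / Q))"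
    using X Q by (simp add: field_simps)
  also have "\<dots> = M" using X Q unfolding X_def[symmetric] Q_def[symmetric] by simp
  finally show ?thesis unfolding M_def X_def Q_def .
qed

lemma chord_upper: fixes a b p y :: real
  assumes b: "0 < b" "b < a" and p: "1 \<le> p" and y: "b \<le> y" "y \<le> a"
  shows "y powr p \<le> b powr p + (a powr p - b powr p) / (a - b) * (y - b)"
proof -
  define t where "t = (y - b) / (a - b)"
  have t: "0 \<le> t" "t \<le> 1" unfolding t_def using b y by auto
  have "t * (a - b) = y - b" unfolding t_def using b by simp
  hence yt: "y = (1 - t) *\<^sub>R b + t *\<^sub>R a" by (simp add: algebra_simps)
  have "y powr p \<le> (1 - t) * b powr p + t * a powr p"
    unfolding yt by (rule convex_onD[OF powr_convex[OF p]], insert t b, auto)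
  also have "\<dots> = b powr p + t * (a powr p - b powr p)" by (simp add: algebra_simps)
  also have "\<dots> = b powr p + (a powr p - b powr p) / (a - b) * (y - b)"
    unfolding t_def by simp
  finally show ?thesis .
qed

lemma chord_lower: fixes a b p x :: real
  assumes b: "0 < b" "b < a" and p: "1 \<le> p" "p \<le> 2" and x: "b \<le> x" "x \<le> a"
  shows "4 * a * b / (a + b)^2 * (b powr p + (a powr p - b powr p) / (a - b) * (x - b)) \<le> x powr p"
proof -
  define t where "t = (x - b) / (a - b)"
  define th where "th = 2 - p"
  have t: "0 \<le> t" "t \<le> 1" unfolding t_def using b x by auto
  have th: "0 \<le> th" "th \<le> 1" unfolding th_def using p by auto
  have pth: "p = 2 - th" unfolding th_def by simp
  have "t * (a - b) = x - b" unfolding t_def using b by simp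
  hence xt: "x = (1 - t) * b + t * a" by (simp add: algebra_simps)
  define L where "L = b powr p + (a powr p - b powr p) / (a - b) * (x - b)"
  have "(1 - t) * b powr p + t * a powr p = b powr p + t * (a powr p - b powr p)" by (simp add: algebra_simps)
  also have "\<dots> = L" unfolding L_def t_def by simp
  finally have L: "L = (1 - t) * b powr p + t * a powr p" by simp
  define Q where "Q = (1 - t) * b^2 + t * a^2"
  have x0: "x > 0" using b x by auto
  have "b^2 \<le> a^2" using b by (intro power_mono) auto
  hence "0 \<le> t * (a^2 - b^2)" using t by simp
  moreover have "Q = b^2 + t * (a^2 - b^2)" unfolding Q_def by (simp add: algebra_simps)
  moreover have "b^2 > 0" using b by simp
  ultimately have Q0: "Q > 0" by linarith
  have H: "L \<le> x powr th * Q powr (1 - th)"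
    unfolding L pth xt Q_def by (rule holder2, insert t b th, auto)
  define K where "K = (a + b)^2 / (4 * a * b)"
  have "(a + b)^2 - 4 * a * b = (a - b)^2" by (simp add: power2_eq_square algebra_simps)
  hence "4 * a * b \<le> (a + b)^2" by (metis diff_ge_0_iff_ge zero_le_power2)
  moreover have "4 * a * b > 0" using b by simp
  ultimately have K1: "K \<ge> 1" unfolding K_def by simp
  have QK: "Q \<le> K * x^2"
  proof -
    have Qe: "Q = (a + b) * x - a * b" unfolding Q_def xt by (simp add: algebra_simps power2_eq_square)
    have "K * x^2 - Q = ((a + b) * x - 2 * a * b)^2 / (4 * a * b)"
      unfolding Qe K_def using b by (simp add: field_simps power2_eq_square)
    also have "\<dots> \<ge> 0" using b by simp
    finally show ?thesis by simp
  qed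
  have "Q powr (1 - th) \<le> (K * x^2) powr (1 - th)"
    by (rule powr_mono2, insert th Q0 QK, auto)
  also have "\<dots> = K powr (1 - th) * (x^2) powr (1 - th)"
    by (rule powr_mult)
  also have "(x^2) powr (1 - th) = x powr (2 * (1 - th))"
  proof -
    have "x^2 = x powr 2" using x0 by (simp add: powr_numeral)
    thus ?thesis by (simp add: powr_powr)
  qed
  finally have Qb: "Q powr (1 - th) \<le> K powr (1 - th) * x powr (2 * (1 - th))" .
  have "K powr (1 - th) \<le> K powr 1"
    by (rule powr_mono, insert th K1, auto)
  hence Kb: "K powr (1 - th) \<le> K" using K1 by simp
  have "x powr th * Q powr (1 - th) \<le> x powr th * (K powr (1 - th) * x powr (2 * (1 - th)))"
    by (rule mult_left_mono[OF Qb], simp)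
  hence "L \<le> x powr th * (K powr (1 - th) * x powr (2 * (1 - th)))"
    using H by linarith
  also have "\<dots> = K powr (1 - th) * (x powr th * x powr (2 * (1 - th)))" by (simp add: mult_ac)
  also have "\<dots> = K powr (1 - th) * x powr p"
  proof -
    have "x powr th * x powr (2 * (1 - th)) = x powr (th + 2 * (1 - th))" by (rule powr_add[symmetric])
    also have "th + 2 * (1 - th) = p" unfolding pth by simp
    finally show ?thesis by simp
  qed
  also have "\<dots> \<le> K * x powr p"
    by (rule mult_right_mono[OF Kb], simp)
  finally have LK: "L \<le> K * x powr p" .
  have "4 * a * b / (a + b)^2 = 1 / K" unfolding K_def by simp
  hence "4 * a * b / (a + b)^2 * L = L / K" by simp
  also have "\<dots> \<le> x powr p" using LK K1 by (simp add: divide_le_eq mult.commute)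
  finally show ?thesis unfolding L_def .
qed

lemma scalar_bounds: fixes a b p :: real
  assumes b: "0 < b" "b \<le> a" and p: "1 \<le> p" "p \<le> 2"
  defines "A1 \<equiv> (if a = b then 0 else (a powr p - b powr p) / (a - b))"
  defines "A0 \<equiv> b powr p - A1 * b"
  shows "\<And>y. b \<le> y \<Longrightarrow> y \<le> a \<Longrightarrow> y powr p \<le> A0 + A1 * y"
    and "\<And>x. b \<le> x \<Longrightarrow> x \<le> a \<Longrightarrow> 4 * a * b / (a + b)^2 * (A0 + A1 * x) \<le> x powr p"
proof -
  fix y assume y: "b \<le> y" "y \<le> a"
  show "y powr p \<le> A0 + A1 * y"
  proof (cases "a = b")
    case True
    hence "y = b" using y by simp
    thus ?thesis unfolding A0_def A1_def using True by simp
  next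
    case False
    hence ba: "b < a" using b by simp
    have "A0 + A1 * y = b powr p + A1 * (y - b)" unfolding A0_def by (simp add: algebra_simps)
    hence "A0 + A1 * y = b powr p + (a powr p - b powr p) / (a - b) * (y - b)"
      unfolding A1_def using False by simp
    thus ?thesis using chord_upper[OF b(1) ba p(1) y] by simp
  qed
next
  fix x assume x: "b \<le> x" "x \<le> a"
  show "4 * a * b / (a + b)^2 * (A0 + A1 * x) \<le> x powr p"
  proof (cases "a = b")
    case True
    hence xb: "x = b" using x by simp
    have "4 * a * b / (a + b)^2 = 1" using True b by (simp add: power2_eq_square)
    thus ?thesis unfolding A0_def A1_def using True xb by simp
  next
    case False
    hence ba: "b < a" using b by simp
    have "A0 + A1 * x = b powr p + A1 * (x - b)" unfolding A0_def by (simp add: algebra_simps)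
    hence "A0 + A1 * x = b powr p + (a powr p - b powr p) / (a - b) * (x - b)"
      unfolding A1_def using False by simp
    thus ?thesis using chord_lower[OF b(1) ba p x] by simp
  qed
qed

theorem proposition1p11:
  fixes Z :: "complex mat" and n :: nat and a b p :: real
  assumes Z: "posdef_mat Z n"
    and a_eig: "eigenvalue Z (complex_of_real a)"
    and a_max: "\<forall>\<mu>. eigenvalue Z \<mu> \<longrightarrow> Re \<mu> \<le> a"
    and b_eig: "eigenvalue Z (complex_of_real b)"
    and b_min: "\<forall>\<mu>. eigenvalue Z \<mu> \<longrightarrow> b \<le> Re \<mu>"
    and p: "1 \<le> p" "p \<le> 2"
  shows "\<forall>k V. isometry_mat V n k \<longrightarrow>
     loewner_ge (mat_powr (compression V Z) p)
                (complex_of_real (4 * a * b / (a + b)^2) \<cdot>\<^sub>m compression V (mat_powr Z p)) k"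
proof (intro allI impI)
  fix k V assume iso: "isometry_mat V n k"
  have Vc: "V \<in> carrier_mat n k" and VV: "mat_adjoint V * V = 1\<^sub>m k" using iso unfolding isometry_mat_def by auto
  have Zc: "Z \<in> carrier_mat n n" and hZ: "mat_adjoint Z = Z"
    and Zpos: "\<And>v. v \<in> carrier_vec n \<Longrightarrow> v \<noteq> 0\<^sub>v n \<Longrightarrow> 0 < Re ((Z *\<^sub>v v) \<bullet>c v)"
    using Z unfolding posdef_mat_def hermitian_mat_def by auto
  have dZ: "dim_row Z = n" using Zc by auto
  from b_eig obtain vb where "eigenvector Z vb (complex_of_real b)" unfolding eigenvalue_def by auto
  hence vb: "vb \<in> carrier_vec n" "vb \<noteq> 0\<^sub>v n" "Z *\<^sub>v vb = complex_of_real b \<cdot>\<^sub>v vb"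
    unfolding eigenvector_def dZ by auto
  define rb where "rb = (\<Sum>i<n. (cmod (vb $ i))^2)"
  have rb: "rb > 0" unfolding rb_def by (rule self_inner_pos[OF vb(1,2)])
  have "(Z *\<^sub>v vb) \<bullet>c vb = complex_of_real b * (vb \<bullet>c vb)"
    unfolding vb(3) by (rule smult_scalar_prod_distrib[of _ n], insert vb, auto)
  also have "\<dots> = complex_of_real (b * rb)" unfolding self_inner[OF vb(1)] rb_def by simp
  finally have "0 < b * rb" using Zpos[OF vb(1,2)] by simp
  hence b0: "b > 0" using rb by (simp add: zero_less_mult_iff)
  have ba: "b \<le> a" using a_max b_eig by force
  obtain U0 d0 where U0: "unitary_mat U0 n" and Z0: "Z = U0 * diag_real n d0 * mat_adjoint U0"
    using spectral[of Z n] Zc hZ unfolding hermitian_mat_def by auto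
  have d0: "\<forall>i<n. 0 \<le> d0 i"
  proof (intro allI impI)
    fix i assume i: "i < n"
    have "0 < Re ((Z *\<^sub>v col U0 i) \<bullet>c col U0 i)" by (rule Zpos, insert udu_eig(3,4)[OF U0 i])
    also have "(Z *\<^sub>v col U0 i) \<bullet>c col U0 i = complex_of_real (d0 i)"
      unfolding Z0 by (rule udu_eig_qf[OF U0 i])
    finally show "0 \<le> d0 i" by simp
  qed
  have "\<exists>B U d. unitary_mat U (dim_row Z) \<and> (\<forall>i < dim_row Z. 0 \<le> d i) \<and>
      Z = U * diag_real (dim_row Z) d * mat_adjoint U \<and>
      B = U * diag_real (dim_row Z) (\<lambda>i. d i powr p) * mat_adjoint U"
    using U0 d0 Z0 unfolding dZ by blast
  from someI_ex[OF this, folded mat_powr_def]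
  obtain U1 d1 where U1: "unitary_mat U1 n" and Z1: "Z = U1 * diag_real n d1 * mat_adjoint U1"
    and Zp: "mat_powr Z p = U1 * diag_real n (\<lambda>i. d1 i powr p) * mat_adjoint U1"
    unfolding dZ by blast
  have U1c: "U1 \<in> carrier_mat n n" using U1 unfolding unitary_mat_def by auto
  have d1: "\<And>i. i < n \<Longrightarrow> b \<le> d1 i \<and> d1 i \<le> a"
  proof -
    fix i assume i: "i < n"
    have "eigenvector Z (col U1 i) (complex_of_real (d1 i))"
      unfolding eigenvector_def dZ using udu_eig(1)[OF U1 i, of d1] udu_eig(3,4)[OF U1 i] Z1 by simp
    hence "eigenvalue Z (complex_of_real (d1 i))" unfolding eigenvalue_def by auto
    thus "b \<le> d1 i \<and> d1 i \<le> a" using a_max b_min by force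
  qed
  have Zqf: "\<And>y. y \<in> carrier_vec n \<Longrightarrow> (Z *\<^sub>v y) \<bullet>c y = complex_of_real (\<Sum>i<n. d1 i * (cmod ((mat_adjoint U1 *\<^sub>v y) $ i))^2)"
    unfolding Z1 by (rule qf_diag[OF U1c])
  have Zpqf: "\<And>y. y \<in> carrier_vec n \<Longrightarrow> (mat_powr Z p *\<^sub>v y) \<bullet>c y = complex_of_real (\<Sum>i<n. d1 i powr p * (cmod ((mat_adjoint U1 *\<^sub>v y) $ i))^2)"
    unfolding Zp by (rule qf_diag[OF U1c])
  have Z1norm: "\<And>y. y \<in> carrier_vec n \<Longrightarrow> (\<Sum>i<n. (cmod ((mat_adjoint U1 *\<^sub>v y) $ i))^2) = (\<Sum>i<n. (cmod (y $ i))^2)"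
    by (rule unitary_norm[OF U1])
  define X where "X = compression V Z"
  have X': "X = mat_adjoint V * Z * V" unfolding X_def compression_def ..
  have Xc: "X \<in> carrier_mat k k" unfolding X' using Vc Zc by auto
  have dX: "dim_row X = k" using Xc by auto
  have hX: "mat_adjoint X = X" unfolding X' by (rule herm_comp[OF Vc Zc hZ])
  have Xqf: "\<And>v. v \<in> carrier_vec k \<Longrightarrow> (X *\<^sub>v v) \<bullet>c v = (Z *\<^sub>v (V *\<^sub>v v)) \<bullet>c (V *\<^sub>v v)"
    unfolding X' by (rule comp_qf[OF Vc Zc])
  have Vnorm: "\<And>v. v \<in> carrier_vec k \<Longrightarrow> (\<Sum>i<n. (cmod ((V *\<^sub>v v) $ i))^2) = (\<Sum>i<k. (cmod (v $ i))^2)"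
  proof -
    fix v :: "complex Matrix.vec" assume v: "v \<in> carrier_vec k"
    have "complex_of_real (\<Sum>i<n. (cmod ((V *\<^sub>v v) $ i))^2) = complex_of_real (\<Sum>i<k. (cmod (v $ i))^2)"
      using isometry_inner[OF Vc VV v] self_inner[OF mv_carrier[OF Vc v]] self_inner[OF v] Vc v by simp
    thus "(\<Sum>i<n. (cmod ((V *\<^sub>v v) $ i))^2) = (\<Sum>i<k. (cmod (v $ i))^2)" by (simp only: of_real_eq_iff)
  qed
  obtain W0 e0 where W0: "unitary_mat W0 k" and X0: "X = W0 * diag_real k e0 * mat_adjoint W0"
    using spectral[of X k] Xc hX unfolding hermitian_mat_def by auto
  have Vcol_ne: "\<And>W i. unitary_mat W k \<Longrightarrow> i < k \<Longrightarrow> V *\<^sub>v col W i \<noteq> 0\<^sub>v n"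
  proof
    fix W i assume W: "unitary_mat W k" and i: "i < k" and eq: "V *\<^sub>v col W i = 0\<^sub>v n"
    have "(V *\<^sub>v col W i) \<bullet>c (V *\<^sub>v col W i) = 1"
      using isometry_inner[OF Vc VV udu_eig(3)[OF W i]] udu_eig(2)[OF W i] by simp
    thus False unfolding eq by simp
  qed
  have e0: "\<forall>i<k. 0 \<le> e0 i"
  proof (intro allI impI)
    fix i assume i: "i < k"
    have "0 < Re ((Z *\<^sub>v (V *\<^sub>v col W0 i)) \<bullet>c (V *\<^sub>v col W0 i))"
      by (rule Zpos, insert Vcol_ne[OF W0 i] udu_eig(3)[OF W0 i] Vc, auto)
    also have "(Z *\<^sub>v (V *\<^sub>v col W0 i)) \<bullet>c (V *\<^sub>v col W0 i) = complex_of_real (e0 i)"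
      unfolding Xqf[OF udu_eig(3)[OF W0 i], symmetric] X0 by (rule udu_eig_qf[OF W0 i])
    finally show "0 \<le> e0 i" by simp
  qed
  have "\<exists>B U d. unitary_mat U (dim_row X) \<and> (\<forall>i < dim_row X. 0 \<le> d i) \<and>
      X = U * diag_real (dim_row X) d * mat_adjoint U \<and>
      B = U * diag_real (dim_row X) (\<lambda>i. d i powr p) * mat_adjoint U"
    using W0 e0 X0 unfolding dX by blast
  from someI_ex[OF this, folded mat_powr_def]
  obtain W1 e1 where W1: "unitary_mat W1 k" and X1: "X = W1 * diag_real k e1 * mat_adjoint W1"
    and Xp: "mat_powr X p = W1 * diag_real k (\<lambda>i. e1 i powr p) * mat_adjoint W1"
    unfolding dX by blast
  have W1c: "W1 \<in> carrier_mat k k" using W1 unfolding unitary_mat_def by auto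
  have e1: "\<And>i. i < k \<Longrightarrow> b \<le> e1 i \<and> e1 i \<le> a"
  proof -
    fix i assume i: "i < k"
    define y where "y = V *\<^sub>v col W1 i"
    have y: "y \<in> carrier_vec n" unfolding y_def using Vc udu_eig(3)[OF W1 i] by auto
    define w where "w = mat_adjoint U1 *\<^sub>v y"
    have ny: "(\<Sum>j<n. (cmod (y $ j))^2) = 1"
    proof -
      have "complex_of_real (\<Sum>j<n. (cmod (y $ j))^2) = 1"
        using self_inner[OF y] isometry_inner[OF Vc VV udu_eig(3)[OF W1 i]] udu_eig(2)[OF W1 i]
        unfolding y_def by simp
      thus ?thesis by (metis of_real_eq_1_iff)
    qed
    have nw: "(\<Sum>j<n. (cmod (w $ j))^2) = 1" unfolding w_def Z1norm[OF y] ny ..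
    have "complex_of_real (e1 i) = (X *\<^sub>v col W1 i) \<bullet>c col W1 i"
      unfolding X1 by (rule udu_eig_qf[OF W1 i, symmetric])
    also have "\<dots> = (Z *\<^sub>v y) \<bullet>c y" unfolding y_def by (rule Xqf[OF udu_eig(3)[OF W1 i]])
    also have "\<dots> = complex_of_real (\<Sum>j<n. d1 j * (cmod (w $ j))^2)" unfolding w_def by (rule Zqf[OF y])
    finally have ee: "e1 i = (\<Sum>j<n. d1 j * (cmod (w $ j))^2)" by (simp only: of_real_eq_iff)
    have "b = (\<Sum>j<n. b * (cmod (w $ j))^2)" unfolding sum_distrib_left[symmetric] nw by simp
    also have "\<dots> \<le> (\<Sum>j<n. d1 j * (cmod (w $ j))^2)"
      by (rule sum_mono, rule mult_right_mono, insert d1, auto)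
    finally have 1: "b \<le> e1 i" unfolding ee .
    have "(\<Sum>j<n. d1 j * (cmod (w $ j))^2) \<le> (\<Sum>j<n. a * (cmod (w $ j))^2)"
      by (rule sum_mono, rule mult_right_mono, insert d1, auto)
    also have "\<dots> = a" unfolding sum_distrib_left[symmetric] nw by simp
    finally have 2: "e1 i \<le> a" unfolding ee .
    show "b \<le> e1 i \<and> e1 i \<le> a" using 1 2 by simp
  qed
  define A1 where "A1 = (if a = b then 0 else (a powr p - b powr p) / (a - b))"
  define A0 where "A0 = b powr p - A1 * b"
  define c where "c = 4 * a * b / (a + b)^2"
  note sb = scalar_bounds[OF b0 ba p, folded A1_def, folded A0_def, folded c_def]
  have c0: "c \<ge> 0" unfolding c_def using b0 ba by simp
  define M where "M = compression V (mat_powr Z p)"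
  have Zpc: "mat_powr Z p \<in> carrier_mat n n" unfolding Zp using U1c by auto
  have hZp: "mat_adjoint (mat_powr Z p) = mat_powr Z p" unfolding Zp by (rule herm_udu[OF U1c])
  have M': "M = mat_adjoint V * mat_powr Z p * V" unfolding M_def compression_def ..
  have Mc: "M \<in> carrier_mat k k" unfolding M' using Vc Zpc by auto
  have hM: "mat_adjoint M = M" unfolding M' by (rule herm_comp[OF Vc Zpc hZp])
  have Xpc: "mat_powr X p \<in> carrier_mat k k" unfolding Xp using W1c by auto
  have hXp: "mat_adjoint (mat_powr X p) = mat_powr X p" unfolding Xp by (rule herm_udu[OF W1c])
  have Xpqf: "\<And>v. v \<in> carrier_vec k \<Longrightarrow> (mat_powr X p *\<^sub>v v) \<bullet>c v = complex_of_real (\<Sum>i<k. e1 i powr p * (cmod ((mat_adjoint W1 *\<^sub>v v) $ i))^2)"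
    unfolding Xp by (rule qf_diag[OF W1c])
  have Xqf1: "\<And>v. v \<in> carrier_vec k \<Longrightarrow> (X *\<^sub>v v) \<bullet>c v = complex_of_real (\<Sum>i<k. e1 i * (cmod ((mat_adjoint W1 *\<^sub>v v) $ i))^2)"
    unfolding X1 by (rule qf_diag[OF W1c])
  have W1norm: "\<And>v. v \<in> carrier_vec k \<Longrightarrow> (\<Sum>i<k. (cmod ((mat_adjoint W1 *\<^sub>v v) $ i))^2) = (\<Sum>i<k. (cmod (v $ i))^2)"
    by (rule unitary_norm[OF W1])
  have psd: "0 \<le> Re (((mat_powr X p - complex_of_real c \<cdot>\<^sub>m M) *\<^sub>v v) \<bullet>c v)" if v: "v \<in> carrier_vec k" for v
  proof -
    define y where "y = V *\<^sub>v v"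
    have y: "y \<in> carrier_vec n" unfolding y_def using Vc v by auto
    define w where "w = mat_adjoint U1 *\<^sub>v y"
    define w' where "w' = mat_adjoint W1 *\<^sub>v v"
    define Nv where "Nv = (\<Sum>i<k. (cmod (v $ i))^2)"
    have Mv: "(M *\<^sub>v v) \<bullet>c v = complex_of_real (\<Sum>j<n. d1 j powr p * (cmod (w $ j))^2)"
      unfolding M' comp_qf[OF Vc Zpc v] w_def y_def[symmetric] by (rule Zpqf[OF y])
    have "(\<Sum>j<n. d1 j powr p * (cmod (w $ j))^2) \<le> (\<Sum>j<n. (A0 + A1 * d1 j) * (cmod (w $ j))^2)"
      by (rule sum_mono, rule mult_right_mono, insert sb(1) d1, auto)
    also have "\<dots> = A0 * (\<Sum>j<n. (cmod (w $ j))^2) + A1 * (\<Sum>j<n. d1 j * (cmod (w $ j))^2)"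
      by (simp add: sum.distrib sum_distrib_left algebra_simps)
    also have "(\<Sum>j<n. (cmod (w $ j))^2) = Nv" unfolding w_def Nv_def using Z1norm[OF y] Vnorm[OF v] unfolding y_def by simp
    also have "(\<Sum>j<n. d1 j * (cmod (w $ j))^2) = (\<Sum>i<k. e1 i * (cmod (w' $ i))^2)"
    proof -
      have "complex_of_real (\<Sum>j<n. d1 j * (cmod (w $ j))^2) = (Z *\<^sub>v y) \<bullet>c y"
        using Zqf[OF y] unfolding w_def by simp
      also have "\<dots> = (X *\<^sub>v v) \<bullet>c v" using Xqf[OF v] unfolding y_def by simp
      also have "\<dots> = complex_of_real (\<Sum>i<k. e1 i * (cmod (w' $ i))^2)"
        using Xqf1[OF v] unfolding w'_def by simp
      finally have "complex_of_real (\<Sum>j<n. d1 j * (cmod (w $ j))^2) = complex_of_real (\<Sum>i<k. e1 i * (cmod (w' $ i))^2)" .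
      thus ?thesis by (simp only: of_real_eq_iff)
    qed
    also have "Nv = (\<Sum>i<k. (cmod (w' $ i))^2)" unfolding Nv_def w'_def W1norm[OF v] ..
    also have "A0 * (\<Sum>i<k. (cmod (w' $ i))^2) + A1 * (\<Sum>i<k. e1 i * (cmod (w' $ i))^2)
       = (\<Sum>i<k. (A0 + A1 * e1 i) * (cmod (w' $ i))^2)"
      by (simp add: sum.distrib sum_distrib_left algebra_simps)
    finally have upper: "(\<Sum>j<n. d1 j powr p * (cmod (w $ j))^2) \<le> (\<Sum>i<k. (A0 + A1 * e1 i) * (cmod (w' $ i))^2)" .
    have "c * (\<Sum>j<n. d1 j powr p * (cmod (w $ j))^2) \<le> c * (\<Sum>i<k. (A0 + A1 * e1 i) * (cmod (w' $ i))^2)"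
      by (rule mult_left_mono[OF upper c0])
    also have "\<dots> = (\<Sum>i<k. (c * (A0 + A1 * e1 i)) * (cmod (w' $ i))^2)"
      by (simp add: sum_distrib_left mult.assoc)
    also have "\<dots> \<le> (\<Sum>i<k. e1 i powr p * (cmod (w' $ i))^2)"
      by (rule sum_mono, rule mult_right_mono, insert sb(2)[unfolded c_def[symmetric]] e1, auto)
    finally have main: "c * (\<Sum>j<n. d1 j powr p * (cmod (w $ j))^2) \<le> (\<Sum>i<k. e1 i powr p * (cmod (w' $ i))^2)" .
    have "((mat_powr X p - complex_of_real c \<cdot>\<^sub>m M) *\<^sub>v v) \<bullet>c v
       = (mat_powr X p *\<^sub>v v) \<bullet>c v - complex_of_real c * ((M *\<^sub>v v) \<bullet>c v)"
      by (rule qf_lin[OF Xpc Mc v])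
    also have "\<dots> = complex_of_real ((\<Sum>i<k. e1 i powr p * (cmod (w' $ i))^2) - c * (\<Sum>j<n. d1 j powr p * (cmod (w $ j))^2))"
      unfolding Xpqf[OF v] Mv w'_def by simp
    finally show ?thesis using main by simp
  qed
  show "loewner_ge (mat_powr X p) (complex_of_real (4 * a * b / (a + b)^2) \<cdot>\<^sub>m compression V (mat_powr Z p)) k"
    unfolding loewner_ge_def psd_mat_def hermitian_mat_def c_def[symmetric] M_def[symmetric]
  proof (intro conjI ballI)
    show "mat_powr X p \<in> carrier_mat k k" by (rule Xpc)
    show "complex_of_real c \<cdot>\<^sub>m M \<in> carrier_mat k k" using Mc by auto
    show "mat_powr X p - complex_of_real c \<cdot>\<^sub>m M \<in> carrier_mat k k" using Mc Xpc by auto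
    show "mat_adjoint (mat_powr X p - complex_of_real c \<cdot>\<^sub>m M) = mat_powr X p - complex_of_real c \<cdot>\<^sub>m M"
      using Mc Xpc by (simp add: adj_minus[of _ k k] adj_smult hXp hM)
  qed (rule psd)
qed

end
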